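(* For all positive integers $N$ and $k$, $c_{kN}\ge c_N$.
   Context: $\mathbb{T}$ is the unit circle with normalized Lebesgue measure and $\hat f(n)=\frac{1}{2\pi}\int_0^{2\pi} f(e^{i\theta})e^{-in\theta}\,d\theta$. For a positive integer $M$, $\mathcal{T}_{M+1}$ is the class of $(M+1)\times(M+1)$ complex self-adjoint Toeplitz matrices $A=(a_{j-l})_{j,l=0}^M$, viewed as operators on $\mathbb{C}^{M+1}$ (equivalently on the space of polynomials of degree at most $M$ in $L^2(\mathbb{T})$ with monomial basis) with operator norm $\|A\|$. For such $A$, $\mathcal{G}_A$ is the set of $f\in L^\infty(\mathbb{T})$ with $\hat f(n)=a_n$ for $|n|\le M$, and $c_A=\min\{\|f\|_\infty: f\in\mathcal{G}_A\}$. Then $c_M=\max\{c_A/\|A\|: A\in\mathcal{T}_{M+1},\ A\neq 0\}$ (the maximum is attained). *)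

theory Defs
  imports "HOL-Analysis.Analysis" "HOL-Probability.Essential_Supremum"
begin

text \<open>Functions on the unit circle are parametrized by the angle theta in [0, 2 pi];
  the measure is Lebesgue measure on [0, 2 pi] (normalization is irrelevant for the
  essential supremum, and the Fourier coefficient carries the factor 1/(2 pi)).\<close>

abbreviation circ_measure :: "real measure" where
  "circ_measure \<equiv> lebesgue_on {0..2*pi}"

definition fourier_coeff :: "(real \<Rightarrow> complex) \<Rightarrow> int \<Rightarrow> complex" where
  "fourier_coeff f n =
     (1 / (2*pi)) * (\<integral>\<theta>. f \<theta> * exp (- (\<i> * of_int n * of_real \<theta>)) \<partial>circ_measure)"

definition Linf_norm :: "(real \<Rightarrow> complex) \<Rightarrow> ereal" where
  "Linf_norm f = esssup circ_measure (\<lambda>\<theta>. ereal (cmod (f \<theta>)))"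

definition Linf :: "(real \<Rightarrow> complex) set" where
  "Linf = {f. f \<in> borel_measurable circ_measure \<and> Linf_norm f < \<infinity>}"

text \<open>A self-adjoint Toeplitz matrix A = (a_(j-l))_(j,l=0..M) is given by its symbol
  a :: int => complex on {-M..M} with a(-n) = conj (a n).\<close>
definition selfadj_toeplitz :: "nat \<Rightarrow> (int \<Rightarrow> complex) \<Rightarrow> bool" where
  "selfadj_toeplitz M a \<longleftrightarrow> (\<forall>n. \<bar>n\<bar> \<le> int M \<longrightarrow> a (-n) = cnj (a n))"

definition toeplitz_nonzero :: "nat \<Rightarrow> (int \<Rightarrow> complex) \<Rightarrow> bool" where
  "toeplitz_nonzero M a \<longleftrightarrow> (\<exists>n. \<bar>n\<bar> \<le> int M \<and> a n \<noteq> 0)"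

definition toeplitz_opnorm :: "nat \<Rightarrow> (int \<Rightarrow> complex) \<Rightarrow> real" where
  "toeplitz_opnorm M a = Sup {sqrt (\<Sum>j\<le>M. (cmod (\<Sum>l\<le>M. a (int j - int l) * v l))\<^sup>2) | v.
       (\<Sum>l\<le>M. (cmod (v l))\<^sup>2) \<le> 1}"

definition G_set :: "nat \<Rightarrow> (int \<Rightarrow> complex) \<Rightarrow> (real \<Rightarrow> complex) set" where
  "G_set M a = {f \<in> Linf. \<forall>n. \<bar>n\<bar> \<le> int M \<longrightarrow> fourier_coeff f n = a n}"

text \<open>c_A = min of the L-infinity norms over G_A (the paper shows the minimum is attained,
  so it equals the infimum).\<close>
definition c_A :: "nat \<Rightarrow> (int \<Rightarrow> complex) \<Rightarrow> ereal" where
  "c_A M a = (INF f \<in> G_set M a. Linf_norm f)"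

text \<open>c_M = max of c_A / ||A|| over nonzero self-adjoint Toeplitz A (attained, so = Sup).\<close>
definition c_const :: "nat \<Rightarrow> ereal" where
  "c_const M = (SUP a \<in> {a. selfadj_toeplitz M a \<and> toeplitz_nonzero M a}.
                   c_A M a / ereal (toeplitz_opnorm M a))"

end

theory Submission
  imports Defs
begin


definition Aop :: "nat \<Rightarrow> (int \<Rightarrow> complex) \<Rightarrow> (nat \<Rightarrow> complex) \<Rightarrow> nat \<Rightarrow> complex" where
  "Aop M a w j = (\<Sum>l\<le>M. a (int j - int l) * w l)"

definition nsq :: "nat \<Rightarrow> (nat \<Rightarrow> complex) \<Rightarrow> real" where
  "nsq M w = (\<Sum>l\<le>M. (cmod (w l))\<^sup>2)"

lemma opnorm_set_eq: "{sqrt (\<Sum>j\<le>M. (cmod (\<Sum>l\<le>M. a (int j - int l) * v l))\<^sup>2) | v.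
       (\<Sum>l\<le>M. (cmod (v l))\<^sup>2) \<le> 1} = {sqrt (nsq M (Aop M a v)) | v. nsq M v \<le> 1}"
  by (simp add: Aop_def nsq_def)

lemma opnorm_alt: "toeplitz_opnorm M a = Sup {sqrt (nsq M (Aop M a v)) | v. nsq M v \<le> 1}"
  unfolding toeplitz_opnorm_def opnorm_set_eq ..

lemma nsq_nonneg: "nsq M w \<ge> 0" by (simp add: nsq_def sum_nonneg)

lemma opnorm_bdd: "bdd_above {sqrt (nsq M (Aop M a v)) | v. nsq M v \<le> 1}"
proof -
  define C where "C = (\<Sum>j\<le>M. (\<Sum>l\<le>M. cmod (a (int j - int l)))\<^sup>2)"
  have "sqrt (nsq M (Aop M a v)) \<le> sqrt C" if "nsq M v \<le> 1" for v
  proof -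
    have vl: "cmod (v l) \<le> 1" if "l \<le> M" for l
    proof -
      have "(cmod (v l))\<^sup>2 \<le> nsq M v" unfolding nsq_def
        using that by (intro member_le_sum) auto
      then have "(cmod (v l))\<^sup>2 \<le> 1\<^sup>2" using \<open>nsq M v \<le> 1\<close> by simp
      then show ?thesis by (rule power2_le_imp_le) simp
    qed
    have "cmod (Aop M a v j) \<le> (\<Sum>l\<le>M. cmod (a (int j - int l)))" for j
    proof -
      have "cmod (Aop M a v j) \<le> (\<Sum>l\<le>M. cmod (a (int j - int l) * v l))"
        unfolding Aop_def by (rule norm_sum)
      also have "\<dots> \<le> (\<Sum>l\<le>M. cmod (a (int j - int l)))"
        by (intro sum_mono) (auto simp: norm_mult intro: mult_left_le[OF vl])
      finally show ?thesis .
    qed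
    then have "nsq M (Aop M a v) \<le> C" unfolding nsq_def C_def
      by (intro sum_mono power_mono) auto
    then show ?thesis by simp
  qed
  then have "\<forall>x\<in>{sqrt (nsq M (Aop M a v)) | v. nsq M v \<le> 1}. x \<le> sqrt C" by blast
  then show ?thesis unfolding bdd_above_def by blast
qed

lemma opnorm_nonneg: "toeplitz_opnorm M a \<ge> 0"
proof -
  have "sqrt (nsq M (Aop M a (\<lambda>_. 0))) \<in> {sqrt (nsq M (Aop M a v)) | v. nsq M v \<le> 1}"
    by (auto simp: nsq_def)
  then have "sqrt (nsq M (Aop M a (\<lambda>_. 0))) \<le> toeplitz_opnorm M a"
    unfolding opnorm_alt by (rule cSup_upper[OF _ opnorm_bdd])
  then show ?thesis by (simp add: Aop_def nsq_def)
qed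

lemma opnorm_bound: "sqrt (nsq M (Aop M a w)) \<le> toeplitz_opnorm M a * sqrt (nsq M w)"
proof (cases "nsq M w = 0")
  case True
  then have "\<forall>l\<in>{..M}. (cmod (w l))\<^sup>2 = 0" unfolding nsq_def
    by (subst sum_nonneg_eq_0_iff[symmetric]) auto
  then have "Aop M a w j = 0" for j unfolding Aop_def by (auto intro!: sum.neutral)
  then show ?thesis using nsq_nonneg[of M w] by (simp add: nsq_def opnorm_nonneg)
next
  case False
  define s where "s = sqrt (nsq M w)"
  have s: "s > 0" using False nsq_nonneg[of M w] by (simp add: s_def)
  define v where "v l = w l / of_real s" for l
  have "nsq M v = nsq M w / s\<^sup>2" unfolding nsq_def v_def
    by (simp add: norm_divide power_divide sum_divide_distrib)
  also have "\<dots> = 1" using s False nsq_nonneg[of M w] by (simp add: s_def)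
  finally have "nsq M v \<le> 1" by simp
  then have "sqrt (nsq M (Aop M a v)) \<le> toeplitz_opnorm M a"
    unfolding opnorm_alt by (intro cSup_upper[OF _ opnorm_bdd]) blast
  moreover have "Aop M a v j = Aop M a w j / of_real s" for j
    unfolding Aop_def v_def by (simp add: sum_divide_distrib)
  then have "nsq M (Aop M a v) = nsq M (Aop M a w) / s\<^sup>2"
    unfolding nsq_def by (simp add: norm_divide power_divide sum_divide_distrib)
  then have "sqrt (nsq M (Aop M a v)) = sqrt (nsq M (Aop M a w)) / s"
    using s by (simp add: real_sqrt_divide)
  ultimately show ?thesis using s unfolding s_def[symmetric] by (simp add: divide_le_eq)
qed



definition dil :: "nat \<Rightarrow> (int \<Rightarrow> complex) \<Rightarrow> int \<Rightarrow> complex" where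
  "dil k a n = (if int k dvd n then a (n div int k) else 0)"

lemma sum_split:
  fixes F :: "nat \<Rightarrow> 'b::comm_monoid_add"
  assumes k: "k > 0"
  shows "(\<Sum>j\<le>k*N. F j) = (\<Sum>r<k. \<Sum>q\<le>N. if k*q+r \<le> k*N then F (k*q+r) else 0)"
proof -
  define S where "S = {(r,q). r < k \<and> q \<le> N \<and> k*q+r \<le> k*N}"
  have "(\<Sum>r<k. \<Sum>q\<le>N. if k*q+r \<le> k*N then F (k*q+r) else 0)
      = (\<Sum>(r,q)\<in>{..<k}\<times>{..N}. if k*q+r \<le> k*N then F (k*q+r) else 0)"
    by (simp add: sum.cartesian_product)
  also have "\<dots> = (\<Sum>x\<in>{x\<in>{..<k}\<times>{..N}. k * snd x+fst x \<le> k*N}. F (k * snd x+fst x))"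
    by (subst sum.inter_filter) (auto simp: case_prod_beta)
  also have "{x\<in>{..<k}\<times>{..N}. k * snd x+fst x \<le> k*N} = S" unfolding S_def by auto
  also have "(\<Sum>x\<in>S. F (k * snd x+fst x)) = (\<Sum>(r,q)\<in>S. F (k*q+r))" by (simp add: case_prod_beta)
  also have "\<dots> = (\<Sum>j\<in>(\<lambda>(r,q). k*q+r) ` S. F j)"
  proof -
    have inj: "inj_on (\<lambda>(r,q). k*q+r) S"
    proof (rule inj_onI, clarsimp simp: S_def)
      fix r q r' q' assume "r < k" "r' < k" "k*q+r = k*q'+r'"
      then have "(k*q+r) div k = (k*q'+r') div k" "(k*q+r) mod k = (k*q'+r') mod k" by simp_all
      then show "r = r' \<and> q = q'" using \<open>r<k\<close> \<open>r'<k\<close> by simp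
    qed
    show ?thesis by (subst sum.reindex[OF inj]) (simp add: case_prod_beta comp_def)
  qed
  also have "(\<lambda>(r,q). k*q+r) ` S = {..k*N}"
  proof
    show "(\<lambda>(r,q). k*q+r) ` S \<subseteq> {..k*N}" by (auto simp: S_def)
    show "{..k*N} \<subseteq> (\<lambda>(r,q). k*q+r) ` S"
    proof
      fix j assume j: "j \<in> {..k*N}"
      have "j div k \<le> (k*N) div k" using j by (intro div_le_mono) auto
      then have "j div k \<le> N" using k by simp
      moreover have "k * (j div k) + j mod k = j" by simp
      ultimately have "(j mod k, j div k) \<in> S" using j k by (auto simp: S_def)
      then show "j \<in> (\<lambda>(r,q). k*q+r) ` S" by (rule rev_image_eqI) simp
    qed
  qed
  finally show ?thesis ..
qed

lemma dil_Aop: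
  assumes k: "k > 0" and r: "r < k" and q: "k*q+r \<le> k*N"
  shows "Aop (k*N) (dil k a) v (k*q+r) = Aop N a (\<lambda>p. if k*p+r \<le> k*N then v (k*p+r) else 0) q"
proof -
  have zero: "dil k a (int (k*q+r) - int l) = 0" if "l mod k \<noteq> r" for l
  proof -
    have "\<not> int k dvd (int (k*q+r) - int l)"
    proof
      assume "int k dvd (int (k*q+r) - int l)"
      then have "int (k*q+r) mod int k = int l mod int k" by (simp only: mod_eq_dvd_iff)
      then have "(k*q+r) mod k = l mod k" by (simp flip: of_nat_mod)
      then show False using that r by simp
    qed
    then show ?thesis by (simp add: dil_def)
  qed
  have "Aop (k*N) (dil k a) v (k*q+r) = (\<Sum>l\<in>{l. l \<le> k*N \<and> l mod k = r}. dil k a (int (k*q+r) - int l) * v l)"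
    unfolding Aop_def
  proof (rule sum.mono_neutral_right)
    show "\<forall>l\<in>{..k*N} - {l. l \<le> k*N \<and> l mod k = r}. dil k a (int (k*q+r) - int l) * v l = 0"
    proof
      fix l assume "l \<in> {..k*N} - {l. l \<le> k*N \<and> l mod k = r}"
      then have "l mod k \<noteq> r" by simp
      from zero[OF this] show "dil k a (int (k*q+r) - int l) * v l = 0" by (simp only: mult_zero_left)
    qed
  qed auto
  moreover have seteq: "{l. l \<le> k*N \<and> l mod k = r} = (\<lambda>p. k*p+r) ` {p. p \<le> N \<and> k*p+r \<le> k*N}"
  proof
    show "{l. l \<le> k*N \<and> l mod k = r} \<subseteq> (\<lambda>p. k*p+r) ` {p. p \<le> N \<and> k*p+r \<le> k*N}"
    proof
      fix l assume l: "l \<in> {l. l \<le> k*N \<and> l mod k = r}"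
      have "l div k \<le> (k*N) div k" using l by (intro div_le_mono) auto
      then have "l div k \<le> N" using k by simp
      moreover have "k * (l div k) + r = l" using l mult_div_mod_eq[of k l] by simp
      ultimately show "l \<in> (\<lambda>p. k*p+r) ` {p. p \<le> N \<and> k*p+r \<le> k*N}" using l
        by (intro rev_image_eqI[of "l div k"]) auto
    qed
    show "(\<lambda>p. k*p+r) ` {p. p \<le> N \<and> k*p+r \<le> k*N} \<subseteq> {l. l \<le> k*N \<and> l mod k = r}"
      using r by auto
  qed
  ultimately have "Aop (k*N) (dil k a) v (k*q+r) = (\<Sum>l\<in>(\<lambda>p. k*p+r) ` {p. p \<le> N \<and> k*p+r \<le> k*N}. dil k a (int (k*q+r) - int l) * v l)"
    by simp
  also have "(\<Sum>l\<in>(\<lambda>p. k*p+r) ` {p. p \<le> N \<and> k*p+r \<le> k*N}. dil k a (int (k*q+r) - int l) * v l)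
     = (\<Sum>p\<in>{p. p \<le> N \<and> k*p+r \<le> k*N}. a (int q - int p) * v (k*p+r))"
  proof (subst sum.reindex)
    show "inj_on (\<lambda>p. k*p+r) {p. p \<le> N \<and> k*p+r \<le> k*N}" using k by (auto intro!: inj_onI)
    have "dil k a (int (k*q+r) - int (k*p+r)) = a (int q - int p)" for p
    proof -
      have "int (k*q+r) - int (k*p+r) = int k * (int q - int p)" by (simp add: algebra_simps)
      then show ?thesis using k by (simp add: dil_def)
    qed
    then show "(\<Sum>p\<in>{p. p \<le> N \<and> k*p+r \<le> k*N}. ((\<lambda>l. dil k a (int (k*q+r) - int l) * v l) \<circ> (\<lambda>p. k*p+r)) p)
       = (\<Sum>p\<in>{p. p \<le> N \<and> k*p+r \<le> k*N}. a (int q - int p) * v (k*p+r))" by simp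
  qed
  also have "\<dots> = Aop N a (\<lambda>p. if k*p+r \<le> k*N then v (k*p+r) else 0) q"
    unfolding Aop_def by (rule sum.mono_neutral_cong_left) auto
  finally show ?thesis .
qed

lemma opnorm_dil:
  assumes k: "k > 0"
  shows "toeplitz_opnorm (k*N) (dil k a) \<le> toeplitz_opnorm N a"
  unfolding opnorm_alt[of "k*N"]
proof (rule cSup_least)
  show "{sqrt (nsq (k*N) (Aop (k*N) (dil k a) v)) | v. nsq (k*N) v \<le> 1} \<noteq> {}"
  proof -
    have "nsq (k*N) (\<lambda>_. 0) \<le> 1" by (simp add: nsq_def)
    then show ?thesis by blast
  qed
  fix x assume "x \<in> {sqrt (nsq (k*N) (Aop (k*N) (dil k a) v)) | v. nsq (k*N) v \<le> 1}"
  then obtain v where x: "x = sqrt (nsq (k*N) (Aop (k*N) (dil k a) v))" and v: "nsq (k*N) v \<le> 1" by auto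
  define w where "w = (\<lambda>r p. if k*p+r \<le> k*N then v (k*p+r) else 0)"
  define op where "op = toeplitz_opnorm N a"
  have op: "op \<ge> 0" unfolding op_def by (rule opnorm_nonneg)
  have bnd: "nsq N (Aop N a (w r)) \<le> op\<^sup>2 * nsq N (w r)" for r
  proof -
    have "sqrt (nsq N (Aop N a (w r))) \<le> op * sqrt (nsq N (w r))"
      unfolding op_def by (rule opnorm_bound)
    then have "(sqrt (nsq N (Aop N a (w r))))\<^sup>2 \<le> (op * sqrt (nsq N (w r)))\<^sup>2"
      by (intro power_mono) (auto simp: nsq_nonneg)
    then show ?thesis using nsq_nonneg[of N "Aop N a (w r)"] nsq_nonneg[of N "w r"] by (simp add: power_mult_distrib)
  qed
  have "nsq (k*N) (Aop (k*N) (dil k a) v)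
      = (\<Sum>r<k. \<Sum>q\<le>N. if k*q+r \<le> k*N then (cmod (Aop (k*N) (dil k a) v (k*q+r)))\<^sup>2 else 0)"
    unfolding nsq_def by (rule sum_split[OF k])
  also have "\<dots> = (\<Sum>r<k. \<Sum>q\<le>N. if k*q+r \<le> k*N then (cmod (Aop N a (w r) q))\<^sup>2 else 0)"
  proof (intro sum.cong refl)
    fix r q assume r: "r \<in> {..<k}" and "q \<in> {..N}"
    show "(if k*q+r \<le> k*N then (cmod (Aop (k*N) (dil k a) v (k*q+r)))\<^sup>2 else 0)
        = (if k*q+r \<le> k*N then (cmod (Aop N a (w r) q))\<^sup>2 else 0)"
      using dil_Aop[OF k, of r q N a v] r unfolding w_def by simp
  qed
  also have "\<dots> \<le> (\<Sum>r<k. nsq N (Aop N a (w r)))"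
    unfolding nsq_def by (intro sum_mono) simp
  also have "\<dots> \<le> (\<Sum>r<k. op\<^sup>2 * nsq N (w r))"
    by (intro sum_mono bnd)
  also have "\<dots> = op\<^sup>2 * (\<Sum>r<k. \<Sum>q\<le>N. if k*q+r \<le> k*N then (cmod (v (k*q+r)))\<^sup>2 else 0)"
  proof -
    have "nsq N (w r) = (\<Sum>q\<le>N. if k*q+r \<le> k*N then (cmod (v (k*q+r)))\<^sup>2 else 0)" for r
      unfolding nsq_def w_def by (intro sum.cong refl) simp
    then show ?thesis by (simp add: sum_distrib_left)
  qed
  also have "\<dots> = op\<^sup>2 * nsq (k*N) v"
    unfolding nsq_def by (subst sum_split[OF k]) simp
  also have "\<dots> \<le> op\<^sup>2" using v by (simp add: mult_left_le)
  finally have "nsq (k*N) (Aop (k*N) (dil k a) v) \<le> op\<^sup>2" .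
  then have "sqrt (nsq (k*N) (Aop (k*N) (dil k a) v)) \<le> sqrt (op\<^sup>2)" by (rule real_sqrt_le_mono)
  then show "x \<le> op" unfolding x using op by simp
qed



lemma S_sets: "{0..2*pi} \<in> sets lebesgue" by simp

lemma circ_space: "space circ_measure = {0..2*pi}" by simp

lemma circ_finite: "finite_measure circ_measure"
  by (rule finite_measure_lebesgue_on) simp

lemma circ_emeasure_ne0: "emeasure circ_measure (space circ_measure) \<noteq> 0"
  by (simp add: emeasure_restrict_space)

lemma Linf_norm_nonneg: "Linf_norm f \<ge> 0"
proof (cases "(\<lambda>\<theta>. ereal (cmod (f \<theta>))) \<in> borel_measurable circ_measure")
  case True
  have "esssup circ_measure (\<lambda>_. ereal 0) \<le> esssup circ_measure (\<lambda>\<theta>. ereal (cmod (f \<theta>)))"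
    by (rule esssup_mono) auto
  moreover have "esssup circ_measure (\<lambda>_. ereal 0) = ereal 0" by (rule esssup_const[OF circ_emeasure_ne0])
  ultimately show ?thesis unfolding Linf_norm_def by (simp only: zero_ereal_def)
next
  case False
  then show ?thesis unfolding Linf_norm_def by (simp add: esssup_non_measurable)
qed

lemma Linf_AE:
  assumes "f \<in> Linf"
  obtains B where "B \<ge> 0" "Linf_norm f = ereal B" "AE x in circ_measure. cmod (f x) \<le> B"
proof -
  have ae: "AE x in circ_measure. ereal (cmod (f x)) \<le> Linf_norm f"
    unfolding Linf_norm_def by (rule esssup_AE)
  have "Linf_norm f < \<infinity>" using assms by (simp add: Linf_def)
  moreover have "Linf_norm f \<ge> 0" by (rule Linf_norm_nonneg)
  ultimately obtain B where B: "Linf_norm f = ereal B" "B \<ge> 0"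
    by (cases "Linf_norm f") auto
  show ?thesis using ae B by (intro that[of B]) auto
qed

lemma Linf_integrable:
  assumes "f \<in> Linf"
  shows "integrable circ_measure (\<lambda>\<theta>. f \<theta> * exp (- (\<i> * of_int n * of_real \<theta>)))"
proof -
  obtain B where B: "AE x in circ_measure. cmod (f x) \<le> B" using Linf_AE[OF assms] by blast
  have fm: "f \<in> borel_measurable circ_measure" using assms by (simp add: Linf_def)
  have em: "(\<lambda>\<theta>::real. exp (- (\<i> * of_int n * of_real \<theta>))) \<in> borel_measurable circ_measure"
    by (intro continuous_imp_measurable_on_sets_lebesgue continuous_intros) simp
  show ?thesis
  proof (rule finite_measure.integrable_const_bound[OF circ_finite, where B=B])
    show "AE x in circ_measure. norm (f x * exp (- (\<i> * of_int n * of_real x))) \<le> B"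
      using B by eventually_elim (simp add: norm_mult)
    show "(\<lambda>\<theta>. f \<theta> * exp (- (\<i> * of_int n * of_real \<theta>))) \<in> borel_measurable circ_measure"
      using fm em by measurable
  qed
qed

lemma fourier_HK:
  assumes "f \<in> Linf"
  shows "fourier_coeff f n = (1/(2*pi)) * integral {0..2*pi} (\<lambda>\<theta>. f \<theta> * exp (- (\<i> * of_int n * of_real \<theta>)))"
  unfolding fourier_coeff_def
  by (subst lebesgue_integral_eq_integral[OF Linf_integrable[OF assms]]) simp_all

lemma Linf_integrable_on:
  assumes "f \<in> Linf"
  shows "(\<lambda>\<theta>. f \<theta> * exp (- (\<i> * of_int n * of_real \<theta>))) integrable_on {0..2*pi}"
  using has_integral_integral_lebesgue_on[OF Linf_integrable[OF assms]] by (auto simp: integrable_on_def)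

lemma AE_affine:
  fixes S T :: "real set"
  assumes ae: "AE x in lebesgue_on S. P x" and c: "c \<noteq> 0" and ST: "\<And>\<theta>. \<theta> \<in> T \<Longrightarrow> t + c*\<theta> \<in> S"
    and S: "S \<in> sets lebesgue" and T: "T \<in> sets lebesgue"
  shows "AE \<theta> in lebesgue_on T. P (t + c*\<theta>)"
proof -
  obtain N where N: "N \<in> null_sets (lebesgue_on S)" "{x \<in> space (lebesgue_on S). \<not> P x} \<subseteq> N"
    using ae by (auto simp: eventually_ae_filter)
  have "N \<in> null_sets lebesgue" using N(1) null_sets_restrict_space[OF S] by blast
  then have negN: "negligible N" by (simp add: negligible_iff_null_sets)
  define N' where "N' = (\<lambda>x. (x - t) / c) ` N"
  have "negligible N'" unfolding N'_def
  proof (rule negligible_differentiable_image_negligible)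
    show "(\<lambda>x. (x - t) / c) differentiable_on N"
      unfolding differentiable_on_def differentiable_def
      by (rule c derivative_eq_intros strip exI | simp)+
  qed (use negN in auto)
  then have "negligible (N' \<inter> T)" by (rule negligible_subset) auto
  then have "N' \<inter> T \<in> null_sets (lebesgue_on T)"
    using null_sets_restrict_space[OF T] by (simp add: negligible_iff_null_sets)
  moreover have "{\<theta> \<in> space (lebesgue_on T). \<not> P (t + c*\<theta>)} \<subseteq> N' \<inter> T"
  proof
    fix \<theta> assume th: "\<theta> \<in> {\<theta> \<in> space (lebesgue_on T). \<not> P (t + c*\<theta>)}"
    then have "\<theta> \<in> T" by simp
    then have "t + c*\<theta> \<in> N" using N(2) ST th by auto
    moreover have "\<theta> = ((t + c*\<theta>) - t) / c" using c by simp
    ultimately have "\<theta> \<in> N'" unfolding N'_def by blast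
    then show "\<theta> \<in> N' \<inter> T" using \<open>\<theta> \<in> T\<close> by simp
  qed
  ultimately show ?thesis by (rule AE_I')
qed

lemma measurable_affine_on:
  fixes S T :: "real set" and g :: "real \<Rightarrow> complex"
  assumes g: "g \<in> borel_measurable (lebesgue_on S)" and c: "c \<noteq> 0" and ST: "\<And>\<theta>. \<theta> \<in> T \<Longrightarrow> t + c*\<theta> \<in> S"
    and S: "S \<in> sets lebesgue"
  shows "(\<lambda>\<theta>. g (t + c*\<theta>)) \<in> borel_measurable (lebesgue_on T)"
proof -
  define g0 where "g0 x = (if x \<in> S then g x else 0)" for x
  have "g0 \<in> borel_measurable lebesgue" unfolding g0_def by (rule borel_measurable_if_I[OF g S])
  then have "(\<lambda>x. g0 (t + c *\<^sub>R x)) \<in> borel_measurable lebesgue" by (rule borel_measurable_affine[OF _ c])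
  then have "(\<lambda>x. g0 (t + c *\<^sub>R x)) \<in> borel_measurable (lebesgue_on T)" by (rule measurable_restrict_space1)
  moreover have "g0 (t + c *\<^sub>R x) = g (t + c*x)" if "x \<in> space (lebesgue_on T)" for x
    using ST[of x] that by (simp add: g0_def)
  ultimately show ?thesis using measurable_cong[of "lebesgue_on T"] by (smt (verit, ccfv_SIG))
qed

definition tj :: "nat \<Rightarrow> nat \<Rightarrow> real" where "tj k j = 2*pi*real j / real k"

definition avg :: "nat \<Rightarrow> (real \<Rightarrow> complex) \<Rightarrow> real \<Rightarrow> complex" where
  "avg k g \<theta> = (\<Sum>j<k. g (tj k j + (1/real k)*\<theta>)) / of_nat k"

lemma tj_mono: "k > 0 \<Longrightarrow> j \<le> j' \<Longrightarrow> tj k j \<le> tj k j'"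
  unfolding tj_def by (intro divide_right_mono mult_left_mono) auto

lemma tj_0 [simp]: "tj k 0 = 0" by (simp add: tj_def)
lemma tj_k [simp]: "k > 0 \<Longrightarrow> tj k k = 2*pi" by (simp add: tj_def)

lemma tj_range:
  assumes k: "k > 0" and j: "j < k" and th: "\<theta> \<in> {0..2*pi}"
  shows "tj k j + (1/real k)*\<theta> \<in> {0..2*pi}"
proof -
  have "tj k j \<ge> 0" unfolding tj_def by simp
  moreover have "(1/real k)*\<theta> \<ge> 0" using th by simp
  moreover have "tj k j + (1/real k)*\<theta> \<le> tj k j + (1/real k)*(2*pi)"
    using th k by (intro add_left_mono mult_left_mono) auto
  moreover have "tj k j + (1/real k)*(2*pi) = tj k (Suc j)" unfolding tj_def
    by (simp add: add_divide_distrib algebra_simps)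
  moreover have "tj k (Suc j) \<le> tj k k" using j k by (intro tj_mono) auto
  ultimately show ?thesis using k by simp
qed

lemma avg_Linf:
  assumes g: "g \<in> Linf" and k: "k > 0"
  shows "avg k g \<in> Linf" "Linf_norm (avg k g) \<le> Linf_norm g"
proof -
  obtain B where B: "B \<ge> 0" "Linf_norm g = ereal B" "AE x in circ_measure. cmod (g x) \<le> B"
    using Linf_AE[OF g] by blast
  have gm: "g \<in> borel_measurable circ_measure" using g by (simp add: Linf_def)
  have kz: "1 / real k \<noteq> 0" using k by simp
  have aej: "AE \<theta> in circ_measure. cmod (g (tj k j + (1/real k)*\<theta>)) \<le> B" if "j < k" for j
    by (rule AE_affine[OF B(3) kz]) (use tj_range[OF k that] in auto)
  have mj: "(\<lambda>\<theta>. g (tj k j + (1/real k)*\<theta>)) \<in> borel_measurable circ_measure" if "j < k" for j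
    by (rule measurable_affine_on[OF gm kz]) (use tj_range[OF k that] in auto)
  have ae: "AE \<theta> in circ_measure. \<forall>j\<in>{..<k}. cmod (g (tj k j + (1/real k)*\<theta>)) \<le> B"
    using aej by (subst AE_ball_countable) auto
  have hm: "avg k g \<in> borel_measurable circ_measure"
    unfolding avg_def[abs_def]
    by (intro borel_measurable_divide borel_measurable_sum mj borel_measurable_const) auto
  have aeh: "AE \<theta> in circ_measure. ereal (cmod (avg k g \<theta>)) \<le> ereal B"
    using ae
  proof eventually_elim
    case (elim \<theta>)
    have "cmod (avg k g \<theta>) = cmod (\<Sum>j<k. g (tj k j + (1/real k)*\<theta>)) / real k"
      unfolding avg_def by (simp add: norm_divide)
    also have "\<dots> \<le> (\<Sum>j<k. cmod (g (tj k j + (1/real k)*\<theta>))) / real k"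
      by (intro divide_right_mono norm_sum) auto
    also have "\<dots> \<le> (\<Sum>j<k. B) / real k"
      using elim by (intro divide_right_mono sum_mono) auto
    also have "\<dots> = B" using k by simp
    finally show ?case by simp
  qed
  have "Linf_norm (avg k g) \<le> ereal B"
    unfolding Linf_norm_def using hm aeh by (intro esssup_I) auto
  then show "Linf_norm (avg k g) \<le> Linf_norm g" using B by simp
  then show "avg k g \<in> Linf" using hm B by (auto simp: Linf_def)
qed

lemma shift_Linf:
  assumes g: "g \<in> Linf" and k: "k > 0" and j: "j < k"
  shows "(\<lambda>\<theta>. g (tj k j + (1/real k)*\<theta>)) \<in> Linf"
proof -
  obtain B where B: "B \<ge> 0" "Linf_norm g = ereal B" "AE x in circ_measure. cmod (g x) \<le> B"
    using Linf_AE[OF g] by blast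
  have gm: "g \<in> borel_measurable circ_measure" using g by (simp add: Linf_def)
  have kz: "1 / real k \<noteq> 0" using k by simp
  have aej: "AE \<theta> in circ_measure. cmod (g (tj k j + (1/real k)*\<theta>)) \<le> B"
    by (rule AE_affine[OF B(3) kz]) (use tj_range[OF k j] in auto)
  have mj: "(\<lambda>\<theta>. g (tj k j + (1/real k)*\<theta>)) \<in> borel_measurable circ_measure"
    by (rule measurable_affine_on[OF gm kz]) (use tj_range[OF k j] in auto)
  have "Linf_norm (\<lambda>\<theta>. g (tj k j + (1/real k)*\<theta>)) \<le> ereal B"
    unfolding Linf_norm_def using mj aej by (intro esssup_I) auto
  then show ?thesis using mj by (auto simp: Linf_def)
qed

lemma E_shift:
  assumes k: "k > 0"
  shows "exp (- (\<i> * of_int (int k * n) * of_real ((1/real k) *\<^sub>R x + tj k j)))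
       = exp (- (\<i> * of_int n * of_real x))"
proof -
  have "- (\<i> * of_int (int k * n) * of_real ((1/real k) *\<^sub>R x + tj k j))
      = - (\<i> * of_int n * of_real x) + (2 * of_int (- n * int j) * pi) * \<i>"
    using k by (simp add: tj_def field_simps)
  moreover have "exp ((2 * of_int (- n * int j) * pi) * \<i>) = 1"
    by (rule exp_integer_2pi) simp
  ultimately show ?thesis
    by (simp only: exp_add mult_1_right)
qed

lemma sum_intervals:
  fixes F :: "real \<Rightarrow> complex"
  assumes F: "F integrable_on {0..2*pi}" and k: "k > 0"
  shows "(\<Sum>j<k. integral {tj k j..tj k (Suc j)} F) = integral {0..2*pi} F"
proof -
  have "m \<le> k \<Longrightarrow> (\<Sum>j<m. integral {tj k j..tj k (Suc j)} F) = integral {0..tj k m} F" for m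
  proof (induction m)
    case 0
    have "(F has_integral 0) {0..tj k 0}" by (intro has_integral_null_real) simp
    then show ?case by (simp add: integral_unique)
  next
    case (Suc m)
    have int: "F integrable_on {0..tj k (Suc m)}"
      by (rule integrable_on_subinterval[OF F]) (use tj_mono[OF k Suc.prems] k in auto)
    have "(\<Sum>j<Suc m. integral {tj k j..tj k (Suc j)} F)
        = integral {0..tj k m} F + integral {tj k m..tj k (Suc m)} F"
      using Suc by simp
    also have "\<dots> = integral {0..tj k (Suc m)} F"
      by (rule Henstock_Kurzweil_Integration.integral_combine[OF _ _ int])
        (use tj_mono[OF k, of 0 m] tj_mono[OF k, of m "Suc m"] in auto)
    finally show ?case .
  qed
  from this[of k] show ?thesis using k by simp
qed

lemma piece_integral:
  assumes g: "g \<in> Linf" and k: "k > 0" and j: "j < k"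
  shows "integral {0..2*pi} (\<lambda>\<theta>. g (tj k j + (1/real k)*\<theta>) * exp (- (\<i> * of_int n * of_real \<theta>)))
       = of_nat k * integral {tj k j..tj k (Suc j)} (\<lambda>x. g x * exp (- (\<i> * of_int (int k * n) * of_real x)))"
proof -
  define F where "F = (\<lambda>x. g x * exp (- (\<i> * of_int (int k * n) * of_real x)))"
  have Fi: "F integrable_on {tj k j..tj k (Suc j)}"
    unfolding F_def
    by (rule integrable_on_subinterval[OF Linf_integrable_on[OF g]])
       (use tj_mono[OF k, of 0 j] tj_mono[OF k, of "Suc j" k] j in auto)
  define I where "I = integral {tj k j..tj k (Suc j)} F"
  have "(F has_integral I) (cbox (tj k j) (tj k (Suc j)))"
    using Fi unfolding I_def by (simp add: has_integral_integral)
  from has_integral_affinity'[OF this, of "1/real k" "tj k j"] k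
  have "((\<lambda>x. F ((1/real k) *\<^sub>R x + tj k j)) has_integral (I /\<^sub>R (1/real k) ^ DIM(real)))
        (cbox ((tj k j - tj k j) /\<^sub>R (1/real k)) ((tj k (Suc j) - tj k j) /\<^sub>R (1/real k)))"
    by simp
  moreover have "(tj k (Suc j) - tj k j) /\<^sub>R (1/real k) = 2*pi"
    using k by (simp add: tj_def field_simps)
  moreover have "I /\<^sub>R (1/real k) ^ DIM(real) = of_nat k * I"
    by (simp add: scaleR_conv_of_real)
  moreover have "F ((1/real k) *\<^sub>R x + tj k j) = g (tj k j + (1/real k)*x) * exp (- (\<i> * of_int n * of_real x))" for x
    unfolding F_def using E_shift[OF k, of n x j] by (simp add: add.commute)
  ultimately have "((\<lambda>x. g (tj k j + (1/real k)*x) * exp (- (\<i> * of_int n * of_real x))) has_integral (of_nat k * I)) {0..2*pi}"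
    by simp
  then show ?thesis unfolding I_def F_def by (rule integral_unique)
qed

lemma fourier_avg:
  assumes g: "g \<in> Linf" and k: "k > 0"
  shows "fourier_coeff (avg k g) n = fourier_coeff g (int k * n)"
proof -
  define E where "E m \<theta> = exp (- (\<i> * of_int m * of_real \<theta>))" for m and \<theta> :: real
  define gj where "gj j \<theta> = g (tj k j + (1/real k)*\<theta>)" for j \<theta>
  have gjL: "gj j \<in> Linf" if "j < k" for j
    unfolding gj_def[abs_def] by (rule shift_Linf[OF g k that])
  have "(\<integral>\<theta>. avg k g \<theta> * E n \<theta> \<partial>circ_measure) = (\<integral>\<theta>. (\<Sum>j<k. gj j \<theta> * E n \<theta>) / of_nat k \<partial>circ_measure)"
    unfolding avg_def gj_def by (simp add: sum_distrib_right)
  also have "\<dots> = (\<Sum>j<k. \<integral>\<theta>. gj j \<theta> * E n \<theta> \<partial>circ_measure) / of_nat k"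
  proof -
    have int: "\<And>j. j \<in> {..<k} \<Longrightarrow> integrable circ_measure (\<lambda>\<theta>. gj j \<theta> * E n \<theta>)"
      using Linf_integrable[OF gjL] by (simp add: E_def)
    have "(\<integral>\<theta>. (\<Sum>j<k. gj j \<theta> * E n \<theta>) / of_nat k \<partial>circ_measure)
        = (\<integral>\<theta>. (\<Sum>j<k. gj j \<theta> * E n \<theta>) \<partial>circ_measure) / of_nat k"
      by (rule integral_divide_zero)
    also have "(\<integral>\<theta>. (\<Sum>j<k. gj j \<theta> * E n \<theta>) \<partial>circ_measure) = (\<Sum>j<k. \<integral>\<theta>. gj j \<theta> * E n \<theta> \<partial>circ_measure)"
      by (rule Bochner_Integration.integral_sum[OF int])
    finally show ?thesis .
  qed
  also have "\<dots> = (\<Sum>j<k. of_nat k * integral {tj k j..tj k (Suc j)} (\<lambda>x. g x * E (int k * n) x)) / of_nat k"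
  proof -
    have "(\<integral>\<theta>. gj j \<theta> * E n \<theta> \<partial>circ_measure) = of_nat k * integral {tj k j..tj k (Suc j)} (\<lambda>x. g x * E (int k * n) x)"
      if "j < k" for j
    proof -
      have "(\<integral>\<theta>. gj j \<theta> * E n \<theta> \<partial>circ_measure) = integral {0..2*pi} (\<lambda>\<theta>. gj j \<theta> * E n \<theta>)"
        unfolding E_def by (rule lebesgue_integral_eq_integral[OF Linf_integrable[OF gjL[OF that]]]) simp
      also have "\<dots> = of_nat k * integral {tj k j..tj k (Suc j)} (\<lambda>x. g x * E (int k * n) x)"
        unfolding gj_def E_def by (rule piece_integral[OF g k that])
      finally show ?thesis .
    qed
    then show ?thesis by simp
  qed
  also have "\<dots> = (\<Sum>j<k. integral {tj k j..tj k (Suc j)} (\<lambda>x. g x * E (int k * n) x))"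
    using k by (simp add: sum_distrib_left[symmetric])
  also have "\<dots> = integral {0..2*pi} (\<lambda>x. g x * E (int k * n) x)"
    unfolding E_def by (rule sum_intervals[OF Linf_integrable_on[OF g] k])
  finally have X: "(\<integral>\<theta>. avg k g \<theta> * E n \<theta> \<partial>circ_measure) = integral {0..2*pi} (\<lambda>x. g x * E (int k * n) x)" .
  have "fourier_coeff (avg k g) n = (1/(2*pi)) * (\<integral>\<theta>. avg k g \<theta> * E n \<theta> \<partial>circ_measure)"
    unfolding fourier_coeff_def E_def ..
  also have "\<dots> = (1/(2*pi)) * integral {0..2*pi} (\<lambda>x. g x * E (int k * n) x)" by (simp only: X)
  also have "\<dots> = fourier_coeff g (int k * n)" unfolding E_def by (rule fourier_HK[OF g, symmetric])
  finally show ?thesis .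
qed



lemma ediv_mono:
  fixes x x' :: ereal and p p' :: real
  assumes "0 \<le> x" "x \<le> x'" "0 \<le> p'" "p' \<le> p"
  shows "x / ereal p \<le> x' / ereal p'"
proof (cases "p' = 0")
  case True
  show ?thesis
  proof (cases "x' = 0")
    case True
    then have "x = 0" using assms by simp
    then show ?thesis using True by simp
  next
    case False
    then have "x' > 0" using assms by simp
    then have "x' / ereal p' = \<infinity>" using \<open>p' = 0\<close> by (simp add: divide_ereal_def)
    then show ?thesis by simp
  qed
next
  case False
  then have p'pos: "p' > 0" using assms by simp
  then have ppos: "p > 0" using assms by simp
  have "x / ereal p = x * ereal (1/p)" using ppos by (simp add: divide_ereal_def inverse_eq_divide)
  also have "\<dots> \<le> x' * ereal (1/p')"
    using assms ppos p'pos by (intro ereal_mult_mono) (auto simp: frac_le)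
  also have "\<dots> = x' / ereal p'" using p'pos by (simp add: divide_ereal_def inverse_eq_divide)
  finally show ?thesis .
qed

lemma cA_nonneg: "c_A M a \<ge> 0"
  unfolding c_A_def by (intro INF_greatest Linf_norm_nonneg)

lemma cA_dil:
  assumes k: "k > 0"
  shows "c_A N a \<le> c_A (k*N) (dil k a)"
  unfolding c_A_def
proof (rule INF_greatest)
  fix g assume g: "g \<in> G_set (k*N) (dil k a)"
  then have gL: "g \<in> Linf" by (simp add: G_set_def)
  have "avg k g \<in> G_set N a"
    unfolding G_set_def
  proof (intro CollectI conjI allI impI)
    show "avg k g \<in> Linf" by (rule avg_Linf(1)[OF gL k])
    fix n :: int assume n: "\<bar>n\<bar> \<le> int N"
    have "\<bar>int k * n\<bar> \<le> int (k*N)" using n k by (simp add: abs_mult mult_left_mono)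
    then have "fourier_coeff g (int k * n) = dil k a (int k * n)" using g by (simp add: G_set_def)
    also have "\<dots> = a n" using k by (simp add: dil_def)
    finally show "fourier_coeff (avg k g) n = a n" by (simp add: fourier_avg[OF gL k])
  qed
  then show "(INF f\<in>G_set N a. Linf_norm f) \<le> Linf_norm g"
    by (rule INF_lower2) (rule avg_Linf(2)[OF gL k])
qed

lemma dil_selfadj:
  assumes "selfadj_toeplitz N a" "k > 0"
  shows "selfadj_toeplitz (k*N) (dil k a)"
  unfolding selfadj_toeplitz_def
proof (intro allI impI)
  fix n :: int assume n: "\<bar>n\<bar> \<le> int (k*N)"
  show "dil k a (- n) = cnj (dil k a n)"
  proof (cases "int k dvd n")
    case True
    then obtain m where m: "n = int k * m" by blast
    have "\<bar>m\<bar> \<le> int N"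
    proof -
      have "int k * \<bar>m\<bar> \<le> int k * int N" using n m by (simp add: abs_mult)
      then show ?thesis using assms(2) by simp
    qed
    then have "a (-m) = cnj (a m)" using assms(1) by (simp add: selfadj_toeplitz_def)
    have eq: "- n = int k * (- m)" using m by simp
    have d: "(int k * (- m)) div int k = - m" using assms(2) by (intro nonzero_mult_div_cancel_left) simp
    have "dil k a (- n) = a (- m)" unfolding eq dil_def by (simp only: d dvd_triv_left if_True)
    moreover have "dil k a n = a m" unfolding m dil_def using assms(2) by simp
    ultimately show ?thesis using \<open>a (-m) = cnj (a m)\<close> by simp
  next
    case False
    then show ?thesis by (simp add: dil_def)
  qed
qed

lemma dil_nonzero:
  assumes "toeplitz_nonzero N a" "k > 0"
  shows "toeplitz_nonzero (k*N) (dil k a)"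
proof -
  obtain n where n: "\<bar>n\<bar> \<le> int N" "a n \<noteq> 0" using assms(1) by (auto simp: toeplitz_nonzero_def)
  have "\<bar>int k * n\<bar> \<le> int (k*N)" using n assms(2) by (simp add: abs_mult mult_left_mono)
  moreover have "dil k a (int k * n) = a n" using assms(2) by (simp add: dil_def)
  ultimately show ?thesis using n by (auto simp: toeplitz_nonzero_def)
qed

theorem corollary7p2:
  fixes N k :: nat
  assumes "N > 0" and "k > 0"
  shows "c_const (k * N) \<ge> c_const N"
  unfolding c_const_def
proof (rule SUP_least)
  fix a assume a: "a \<in> {a. selfadj_toeplitz N a \<and> toeplitz_nonzero N a}"
  have mem: "dil k a \<in> {a. selfadj_toeplitz (k*N) a \<and> toeplitz_nonzero (k*N) a}"
    using a dil_selfadj dil_nonzero assms(2) by auto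
  have "c_A N a / ereal (toeplitz_opnorm N a) \<le> c_A (k*N) (dil k a) / ereal (toeplitz_opnorm (k*N) (dil k a))"
    by (intro ediv_mono cA_nonneg cA_dil opnorm_nonneg opnorm_dil assms(2))
  then show "c_A N a / ereal (toeplitz_opnorm N a)
     \<le> (SUP a\<in>{a. selfadj_toeplitz (k*N) a \<and> toeplitz_nonzero (k*N) a}. c_A (k*N) a / ereal (toeplitz_opnorm (k*N) a))"
    by (rule SUP_upper2[OF mem])
qed

end
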